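(* Let $k\in\mathbb{Z}_{\geqslant 2}$. Then for all $n\in\mathbb{Z}_{\geqslant 1}$ and all $0<\varepsilon\leqslant\frac{k-1}{6}$, $$\tau_k(n)\leqslant \min\left(k^{\Omega(n)},\ \left(\tfrac{3(k-1)}{5\varepsilon}\right)^{k^{1/\varepsilon}(k-1)} n^{\varepsilon}\right).$$
   Context: $\tau_k(n)$ is the number of ordered $k$-tuples of positive integers with product $n$; $\Omega(n)$ is the number of prime factors of $n$ counted with multiplicity. *)

theory Defs
  imports "HOL-Analysis.Analysis" "HOL-Computational_Algebra.Primes"
begin

definition divisor_tau :: "nat \<Rightarrow> nat \<Rightarrow> nat" where
  "divisor_tau k n = card {xs :: nat list. length xs = k \<and> (\<forall>x\<in>set xs. x > 0) \<and> prod_list xs = n}"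

definition bigOmega :: "nat \<Rightarrow> nat" where
  "bigOmega n = size (prime_factorization n)"

end

theory Submission
  imports Defs
begin

definition TS :: "nat \<Rightarrow> nat \<Rightarrow> nat list set" where
 "TS k n = {xs :: nat list. length xs = k \<and> (\<forall>x\<in>set xs. x > 0) \<and> prod_list xs = n}"

lemma prime_dvd_prod_list_nat:
  assumes "prime (p::nat)" "p dvd prod_list xs" obtains x where "x \<in> set xs" "p dvd x"
  using assms(2) that
proof (induct xs)
  case Nil then show ?case using assms(1) by (simp add: prime_nat_iff)
next
  case (Cons a xs) then show ?case using assms(1) by (auto simp: prime_dvd_mult_iff)
qed

lemma tau_TS: "divisor_tau k n = card (TS k n)"
  by (simp add: divisor_tau_def TS_def)

lemma TS_finite: assumes "n > 0" shows "finite (TS k n)"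
proof -
  have "TS k n \<subseteq> {xs. set xs \<subseteq> {0..n} \<and> length xs = k}"
  proof
    fix xs assume "xs \<in> TS k n"
    then have "length xs = k" "prod_list xs = n" by (auto simp: TS_def)
    moreover have "x \<le> n" if "x \<in> set xs" for x
      using prod_list_dvd[OF that] assms \<open>prod_list xs = n\<close> by (simp add: dvd_imp_le)
    ultimately show "xs \<in> {xs. set xs \<subseteq> {0..n} \<and> length xs = k}" by auto
  qed
  then show ?thesis by (rule finite_subset) (rule finite_lists_length_eq, simp)
qed

lemma TS_one: "TS k 1 = {replicate k 1}"
proof -
  have "xs = replicate k 1" if "length xs = k" "prod_list xs = 1" for xs :: "nat list"
  proof -
    have "\<forall>x\<in>set xs. x = 1" using that(2)
      by (metis prod_list_dvd nat_dvd_1_iff_1)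
    then show ?thesis using that(1) by (metis replicate_eqI)
  qed
  moreover have "prod_list (replicate k (1::nat)) = 1" by (induct k) auto
  ultimately show ?thesis unfolding TS_def by auto
qed

lemma tau_one: "divisor_tau k 1 = 1"
  by (simp only: tau_TS TS_one) simp

lemma prod_list_update: "i < length xs \<Longrightarrow> prod_list (xs[i := y]) * xs ! i = prod_list xs * (y::nat)"
proof (induct xs arbitrary: i)
  case Nil then show ?case by simp
next
  case (Cons a xs) then show ?case by (cases i) (auto simp: algebra_simps)
qed

lemma tau_prime_mult:
  assumes p: "prime (p::nat)" and m: "m > 0"
  shows "divisor_tau k (p * m) \<le> k * divisor_tau k m"
proof -
  define f where "f = (\<lambda>xs::nat list. let i = (LEAST i. i < length xs \<and> p dvd xs ! i) in (i, xs[i := xs ! i div p]))"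
  have inj: "inj_on f (TS k (p*m))"
  proof (rule inj_onI)
    fix xs ys assume xs: "xs \<in> TS k (p*m)" and ys: "ys \<in> TS k (p*m)" and e: "f xs = f ys"
    have ex: "\<exists>i. i < length zs \<and> p dvd zs ! i" if "zs \<in> TS k (p*m)" for zs
    proof -
      have "p dvd prod_list zs" using that by (simp add: TS_def)
      then obtain x where "x \<in> set zs" "p dvd x" using p
        by (metis prime_dvd_prod_list_nat)
      then show ?thesis by (metis in_set_conv_nth)
    qed
    define i where "i = (LEAST i. i < length xs \<and> p dvd xs ! i)"
    define j where "j = (LEAST i. i < length ys \<and> p dvd ys ! i)"
    have i: "i < length xs \<and> p dvd xs ! i" unfolding i_def by (rule LeastI_ex[OF ex[OF xs]])
    have j: "j < length ys \<and> p dvd ys ! j" unfolding j_def by (rule LeastI_ex[OF ex[OF ys]])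
    have ij: "i = j" and u: "xs[i := xs ! i div p] = ys[j := ys ! j div p]"
      using e unfolding f_def i_def j_def Let_def by auto
    have "xs ! i div p = ys ! j div p" using u ij i j
      by (metis nth_list_update_eq length_list_update)
    then have "xs ! i = ys ! j" using i j by (metis dvd_div_mult_self)
    then show "xs = ys" using u ij
      by (metis list_update_id list_update_overwrite)
  qed
  have img: "f ` TS k (p*m) \<subseteq> {..<k} \<times> TS k m"
  proof
    fix z assume "z \<in> f ` TS k (p*m)"
    then obtain xs where xs: "xs \<in> TS k (p*m)" and z: "z = f xs" by auto
    have "p dvd prod_list xs" using xs by (simp add: TS_def)
    then obtain x where "x \<in> set xs" "p dvd x" using p by (metis prime_dvd_prod_list_nat)
    then have ex: "\<exists>i. i < length xs \<and> p dvd xs ! i" by (metis in_set_conv_nth)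
    define i where "i = (LEAST i. i < length xs \<and> p dvd xs ! i)"
    have i: "i < length xs \<and> p dvd xs ! i" unfolding i_def by (rule LeastI_ex[OF ex])
    have z': "z = (i, xs[i := xs ! i div p])" unfolding z f_def i_def Let_def by simp
    have pos: "\<forall>x\<in>set xs. x > 0" "length xs = k" "prod_list xs = p * m" using xs by (auto simp: TS_def)
    have "xs ! i > 0" using pos i by auto
    then have "xs ! i div p > 0" using i p
      by (metis dvd_div_eq_0_iff gr0I prime_gt_0_nat)
    then have "\<forall>x\<in>set (xs[i := xs ! i div p]). x > 0" using pos
      using set_update_subset_insert[of xs i "xs ! i div p"] by auto
    moreover have "prod_list (xs[i := xs ! i div p]) = m"
    proof -
      have "prod_list (xs[i := xs ! i div p]) * xs ! i = prod_list xs * (xs ! i div p)"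
        using prod_list_update i by blast
      also have "\<dots> = m * (p * (xs ! i div p))" using pos by simp
      also have "p * (xs ! i div p) = xs ! i" using i by simp
      finally show ?thesis using \<open>xs ! i > 0\<close> by simp
    qed
    ultimately show "z \<in> {..<k} \<times> TS k m" using z' i pos by (auto simp: TS_def)
  qed
  have "divisor_tau k (p*m) = card (f ` TS k (p*m))" using inj by (simp add: tau_TS card_image)
  also have "\<dots> \<le> card ({..<k} \<times> TS k m)"
    by (rule card_mono) (use img TS_finite[OF m] in auto)
  also have "\<dots> = k * divisor_tau k m" by (simp add: tau_TS card_cartesian_product)
  finally show ?thesis .
qed

lemma tau_Omega: "n \<ge> 1 \<Longrightarrow> divisor_tau k n \<le> k ^ bigOmega n"
proof (induction n rule: less_induct)
  case (less n)
  show ?case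
  proof (cases "n = 1")
    case True
    have "divisor_tau k n = 1" using True tau_one by simp
    moreover have "k ^ bigOmega n = 1" by (simp add: True bigOmega_def)
    ultimately show ?thesis by (simp only:)
  next
    case False
    then obtain p where p: "prime p" "p dvd n" using less.prems
      by (metis prime_factor_nat)
    then obtain m where n: "n = p * m" by blast
    have m: "m > 0" "m < n" using less.prems n p prime_gt_1_nat[OF p(1)] by auto
    have "bigOmega n = Suc (bigOmega m)" unfolding bigOmega_def n
      using p m by (simp add: prime_factorization_mult prime_factorization_prime)
    then show ?thesis using tau_prime_mult[OF p(1) m(1), of k] less.IH[OF m(2)] m n
      by (auto intro: order.trans)
  qed
qed

lemma gcd_split:
  assumes "coprime (m1::nat) m2" "x dvd m1 * m2"
  shows "x = gcd x m1 * gcd x m2"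
proof -
  have c: "coprime (gcd x m1) (gcd x m2)" using assms(1)
    by (rule coprime_imp_coprime) (meson dvd_trans gcd_dvd2 gcd_dvd1)+
  have "gcd x m1 * gcd x m2 dvd x" 
    by (rule divides_mult[OF _ _ c]) simp_all
  moreover have "x dvd gcd x m1 * gcd x m2"
  proof -
    obtain d1 d2 where d: "x = d1 * d2" "d1 dvd m1" "d2 dvd m2" using dvd_productE[OF assms(2)] by blast
    have "d1 dvd gcd x m1" "d2 dvd gcd x m2" using d by auto
    then show ?thesis using d(1) by (simp add: mult_dvd_mono)
  qed
  ultimately show ?thesis by (simp add: dvd_antisym)
qed

lemma tau_coprime:
  assumes c: "coprime (m1::nat) m2" and pos: "m1 > 0" "m2 > 0"
  shows "divisor_tau k (m1 * m2) \<le> divisor_tau k m1 * divisor_tau k m2"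
proof -
  define f where "f = (\<lambda>xs::nat list. (map (\<lambda>x. gcd x m1) xs, map (\<lambda>x. gcd x m2) xs))"
  have split: "\<And>x. x \<in> set xs \<Longrightarrow> x = gcd x m1 * gcd x m2" if "xs \<in> TS k (m1*m2)" for xs
  proof -
    fix x assume "x \<in> set xs"
    then have "x dvd prod_list xs" by (rule prod_list_dvd)
    then have "x dvd m1 * m2" using that by (simp add: TS_def)
    then show "x = gcd x m1 * gcd x m2" by (rule gcd_split[OF c])
  qed
  have inj: "inj_on f (TS k (m1*m2))"
  proof (rule inj_onI)
    fix xs ys assume xs: "xs \<in> TS k (m1*m2)" and ys: "ys \<in> TS k (m1*m2)" and e: "f xs = f ys"
    have l: "length xs = length ys" using xs ys by (simp add: TS_def)
    have e1: "map (\<lambda>x. gcd x m1) xs = map (\<lambda>x. gcd x m1) ys" using e by (simp add: f_def)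
    have e2: "map (\<lambda>x. gcd x m2) xs = map (\<lambda>x. gcd x m2) ys" using e by (simp add: f_def)
    show "xs = ys"
    proof (rule nth_equalityI[OF l])
      fix i assume i: "i < length xs"
      have g1: "gcd (xs ! i) m1 = gcd (ys ! i) m1"
        using arg_cong[OF e1, of "\<lambda>l. l ! i"] i l by simp
      have g2: "gcd (xs ! i) m2 = gcd (ys ! i) m2"
        using arg_cong[OF e2, of "\<lambda>l. l ! i"] i l by simp
      have "xs ! i = gcd (xs ! i) m1 * gcd (xs ! i) m2" using split[OF xs] i by simp
      also have "\<dots> = gcd (ys ! i) m1 * gcd (ys ! i) m2" using g1 g2 by simp
      also have "\<dots> = ys ! i" using split[OF ys] i l by simp
      finally show "xs ! i = ys ! i" .
    qed
  qed
  have prodsplit: "prod_list (map (\<lambda>x. gcd x m1) xs) = m1 \<and> prod_list (map (\<lambda>x. gcd x m2) xs) = m2"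
    if xs: "xs \<in> TS k (m1*m2)" for xs
  proof -
    define A where "A = prod_list (map (\<lambda>x. gcd x m1) xs)"
    define B where "B = prod_list (map (\<lambda>x. gcd x m2) xs)"
    have "A * B = prod_list (map (\<lambda>x. gcd x m1 * gcd x m2) xs)"
      unfolding A_def B_def by (induct xs) auto
    also have "\<dots> = prod_list xs" using split[OF xs] by (simp add: map_idI)
    also have "\<dots> = m1 * m2" using xs by (simp add: TS_def)
    finally have AB: "A * B = m1 * m2" .
    have cA: "coprime A m2" unfolding A_def
    proof (rule prod_list_coprime_left)
      fix x assume "x \<in> set (map (\<lambda>x. gcd x m1) xs)"
      then obtain y where "x = gcd y m1" by auto
      then show "coprime x m2" using coprime_divisors[OF _ dvd_refl c] by simp
    qed
    have cB: "coprime B m1" unfolding B_def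
    proof (rule prod_list_coprime_left)
      fix x assume "x \<in> set (map (\<lambda>x. gcd x m2) xs)"
      then obtain y where "x = gcd y m2" by auto
      then show "coprime x m1" using coprime_divisors[OF _ dvd_refl c[unfolded coprime_commute[of m1]]] by simp
    qed
    have "A dvd m1 * m2" using AB dvd_triv_left by metis
    then have d1: "A dvd m1" by (simp add: coprime_dvd_mult_left_iff[OF cA])
    have "B dvd m2 * m1" using AB dvd_triv_right by (metis mult.commute)
    then have d2: "B dvd m2" by (simp add: coprime_dvd_mult_left_iff[OF cB])
    have "A \<le> m1" using d1 pos by (simp add: dvd_imp_le)
    have "B \<le> m2" using d2 pos by (simp add: dvd_imp_le)
    have "A = m1"
    proof (rule ccontr)
      assume "A \<noteq> m1"
      then have "A < m1" using \<open>A \<le> m1\<close> by simp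
      have "A * B \<le> A * m2" using \<open>B \<le> m2\<close> by simp
      also have "\<dots> < m1 * m2" using \<open>A < m1\<close> pos by simp
      finally show False using AB by simp
    qed
    moreover have "B = m2" using AB pos calculation by simp
    ultimately have "A = m1 \<and> B = m2" by simp
    then show ?thesis by (simp add: A_def B_def)
  qed
  have img: "f ` TS k (m1*m2) \<subseteq> TS k m1 \<times> TS k m2"
  proof
    fix z assume "z \<in> f ` TS k (m1*m2)"
    then obtain xs where xs: "xs \<in> TS k (m1*m2)" and z: "z = f xs" by auto
    have "length xs = k" using xs by (simp add: TS_def)
    then show "z \<in> TS k m1 \<times> TS k m2" using prodsplit[OF xs] pos
      by (auto simp: z f_def TS_def)
  qed
  have "divisor_tau k (m1*m2) = card (f ` TS k (m1*m2))" using inj by (simp add: tau_TS card_image)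
  also have "\<dots> \<le> card (TS k m1 \<times> TS k m2)"
    by (rule card_mono) (use img TS_finite pos in auto)
  also have "\<dots> = divisor_tau k m1 * divisor_tau k m2" by (simp add: tau_TS card_cartesian_product)
  finally show ?thesis .
qed

lemma prod_list_butlast: "xs \<noteq> [] \<Longrightarrow> prod_list (butlast xs) * last xs = prod_list (xs::nat list)"
proof -
  assume "xs \<noteq> []"
  then have "prod_list xs = prod_list (butlast xs @ [last xs])" by simp
  also have "\<dots> = prod_list (butlast xs) * last xs" by simp
  finally show ?thesis by simp
qed

lemma tau_primepow:
  assumes p: "prime (p::nat)" and kk: "k \<ge> 1"
  shows "divisor_tau k (p ^ a) \<le> (a + 1) ^ (k - 1)"
proof -
  define S where "S = {ys. set ys \<subseteq> (\<lambda>i. p ^ i) ` {0..a} \<and> length ys = k - 1}"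
  have inj: "inj_on butlast (TS k (p^a))"
  proof (rule inj_onI)
    fix xs ys assume xs: "xs \<in> TS k (p^a)" and ys: "ys \<in> TS k (p^a)" and e: "butlast xs = butlast ys"
    have ne1: "xs \<noteq> []" using xs kk unfolding TS_def by (metis (mono_tags) mem_Collect_eq list.size(3) not_one_le_zero)
    have ne2: "ys \<noteq> []" using ys kk unfolding TS_def by (metis (mono_tags) mem_Collect_eq list.size(3) not_one_le_zero)
    note ne = ne1 ne2
    have px: "prod_list (butlast xs) * last xs = p ^ a"
      using xs ne prod_list_butlast by (simp add: TS_def)
    have py: "prod_list (butlast ys) * last ys = p ^ a"
      using ys ne prod_list_butlast by (simp add: TS_def)
    have pa: "p ^ a > 0" using p by (simp add: prime_gt_0_nat)
    have pos: "prod_list (butlast xs) > 0"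
    proof (rule ccontr)
      assume "\<not> prod_list (butlast xs) > 0"
      then have "prod_list (butlast xs) = 0" by simp
      then show False using px pa by simp
    qed
    have "prod_list (butlast xs) * last xs = prod_list (butlast xs) * last ys" using px py e by simp
    then have "last xs = last ys" using pos by simp
    then have "butlast xs @ [last xs] = butlast ys @ [last ys]" using e by simp
    then show "xs = ys" using ne1 ne2 by simp
  qed
  have img: "butlast ` TS k (p^a) \<subseteq> S"
  proof
    fix z assume "z \<in> butlast ` TS k (p^a)"
    then obtain xs where xs: "xs \<in> TS k (p^a)" and z: "z = butlast xs" by auto
    have mem: "x \<in> (\<lambda>i. p ^ i) ` {0..a}" if "x \<in> set xs" for x
    proof -
      have "x dvd p ^ a" using prod_list_dvd[OF that] xs by (simp add: TS_def)
      then obtain i where "i \<le> a" "x = p ^ i" using divides_primepow_nat[OF p] by blast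
      then show ?thesis by simp
    qed
    have "set z \<subseteq> (\<lambda>i. p ^ i) ` {0..a}"
    proof
      fix x assume "x \<in> set z"
      then have "x \<in> set xs" unfolding z by (rule in_set_butlastD)
      then show "x \<in> (\<lambda>i. p ^ i) ` {0..a}" by (rule mem)
    qed
    moreover have "length z = k - 1" using xs z by (simp add: TS_def)
    ultimately show "z \<in> S" unfolding S_def by blast
  qed
  have "divisor_tau k (p^a) = card (butlast ` TS k (p^a))" using inj by (simp add: tau_TS card_image)
  also have "\<dots> \<le> card S"
    by (rule card_mono[OF _ img]) (unfold S_def, rule finite_lists_length_eq, simp)
  also have "card S \<le> (a+1) ^ (k-1)"
  proof -
    have fin: "finite ((\<lambda>i. p ^ i) ` {0..a})" by simp
    have c: "card ((\<lambda>i. p^i) ` {0..a}) \<le> a+1" using card_image_le[of "{0..a}" "\<lambda>i. p^i"] by simp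
    have "card S = card ((\<lambda>i. p^i) ` {0..a}) ^ (k-1)" unfolding S_def by (rule card_lists_length_eq[OF fin])
    also have "\<dots> \<le> (a+1)^(k-1)" by (rule power_mono[OF c]) simp
    finally show ?thesis .
  qed
  finally show ?thesis .
qed

lemma real_R2:
  fixes u a :: real assumes u: "u \<ge> 6" and a: "a \<ge> 0"
  shows "a + 1 \<le> (3 * u / 5) powr 2 * 2 powr (a / u)"
proof -
  have x0: "a / u \<ge> 0" using u a by simp
  have "1 + (2/3) * (a / u) \<le> 1 + ln 2 * (a / u)"
    using mult_right_mono[OF ln2_ge_two_thirds x0] by linarith
  also have "\<dots> \<le> exp (a / u * ln 2)" using exp_ge_add_one_self[of "a/u * ln 2"] by (simp add: mult.commute)
  also have "\<dots> = 2 powr (a / u)" by (simp add: powr_def)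
  finally have e: "1 + (2/3) * (a / u) \<le> 2 powr (a / u)" .
  have B2: "(3 * u / 5) powr 2 = 9 * u^2 / 25" using u by (simp add: powr_numeral power2_eq_square)
  have "a + 1 \<le> 9 * u^2 / 25 + 6 * a * u / 25"
  proof -
    have "36 \<le> u * u" using mult_mono[OF u u] u by simp
    then have "9 * u^2 / 25 \<ge> 9 * 36 / 25" by (simp add: power2_eq_square)
    moreover have "a * 6 \<le> a * u" using mult_left_mono[OF u a] .
    then have "6 * a * u / 25 \<ge> 36 * a / 25" by (simp add: mult.commute)
    ultimately show ?thesis using a by linarith
  qed
  also have "\<dots> = 9 * u^2 / 25 * (1 + (2/3) * (a / u))" using u by (simp add: field_simps power2_eq_square)
  also have "\<dots> \<le> 9 * u^2 / 25 * 2 powr (a / u)" by (rule mult_left_mono[OF e]) simp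
  finally show ?thesis by (simp add: B2)
qed

lemma real_R3:
  fixes u a :: real assumes u: "u \<ge> 6" and a: "a \<ge> 0"
  shows "a + 1 \<le> (3 * u / 5) powr 1 * 3 powr (a / u)"
proof -
  have x0: "a / u \<ge> 0" using u a by simp
  have l3: "ln (3::real) \<ge> 1" using exp_le by (simp add: ln_ge_iff)
  have "(1 + a / u / 2)^2 \<le> exp (a / u / 2) ^ 2"
    using exp_ge_add_one_self[of "a/u/2"] x0 by (intro power_mono) auto
  also have "\<dots> = exp (a / u)" by (simp flip: exp_of_nat_mult)
  also have "\<dots> \<le> exp (a / u * ln 3)" using mult_left_mono[OF l3 x0] by simp
  also have "\<dots> = 3 powr (a / u)" by (simp add: powr_def mult.commute)
  finally have e: "(1 + a / u / 2)^2 \<le> 3 powr (a / u)" .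
  have "a + 1 \<le> 3 * u / 5 * (1 + a / u / 2)^2"
  proof -
    have "3 * u / 5 * (1 + a / u / 2)^2 - (a + 1) = (3 * (a - 4*u/3)^2 + (20/3) * u^2 - 20 * u) / (20 * u)"
      using u by (simp add: field_simps power2_eq_square) 
    also have "\<dots> \<ge> 0"
    proof -
      have "(20/3) * u^2 - 20 * u = (20/3) * u * (u - 3)" by (simp add: algebra_simps power2_eq_square)
      also have "\<dots> \<ge> 0" using u by simp
      finally have h: "(20/3) * u^2 - 20 * u \<ge> 0" .
      have "(a - 4*u/3)^2 \<ge> 0" by simp
      then have "3 * (a - 4*u/3)^2 + (20/3) * u^2 - 20 * u \<ge> 0" using h by linarith
      then show ?thesis using u by simp
    qed
    finally show ?thesis by simp
  qed
  also have "\<dots> \<le> 3 * u / 5 * 3 powr (a / u)" by (rule mult_left_mono[OF e]) (use u in simp)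
  finally show ?thesis using u by simp
qed

lemma prime_local:
  fixes k p a :: nat and \<epsilon> :: real
  assumes k: "k \<ge> 2" and e0: "0 < \<epsilon>" and e1: "\<epsilon> \<le> (real k - 1) / 6" and p: "prime p"
  shows "real (divisor_tau k (p^a)) \<le>
    (3 * (real k - 1) / (5 * \<epsilon>)) powr ((real k - 1) * (if real p < real k powr (1 / \<epsilon>) then (if p = 2 then 2 else 1) else 0))
    * real (p^a) powr \<epsilon>"
proof -
  define B where "B = 3 * (real k - 1) / (5 * \<epsilon>)"
  define Y where "Y = real k powr (1 / \<epsilon>)"
  define u where "u = (real k - 1) / \<epsilon>"
  have k1: "real k - 1 > 0" using k by simp
  have u6: "u \<ge> 6" using e0 e1 k1 unfolding u_def by (simp add: field_simps)
  have Bu: "B = 3 * u / 5" unfolding B_def u_def by simp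
  have Bpos: "B > 0" using u6 Bu by simp
  have p2: "p \<ge> 2" using p by (simp add: prime_ge_2_nat)
  have pa: "(real p ^ a) powr \<epsilon> = real p powr (real a * \<epsilon>)"
    using p2 by (simp add: powr_realpow[symmetric] powr_powr)
  show ?thesis
  proof (cases "real p < Y")
    case False
    have t: "divisor_tau k (p^a) \<le> k ^ a"
      using tau_Omega[of "p^a" k] p2 p by (simp add: bigOmega_def prime_factorization_prime_power)
    have "real k = Y powr \<epsilon>" unfolding Y_def using e0 k by (simp add: powr_powr)
    also have "\<dots> \<le> real p powr \<epsilon>" using False e0 by (intro powr_mono2) (auto simp: Y_def)
    finally have kp: "real k \<le> real p powr \<epsilon>" .
    have "real (divisor_tau k (p^a)) \<le> real k ^ a" using t by (metis of_nat_le_iff of_nat_power)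
    also have "\<dots> \<le> (real p powr \<epsilon>) ^ a" using kp by (intro power_mono) auto
    also have "\<dots> = real p powr (real a * \<epsilon>)" using p2 by (simp add: powr_power)
    finally show ?thesis using False Bpos k e0 by (simp add: pa Y_def[symmetric] B_def[symmetric])
  next
    case True
    define q :: real where "q = (if p = 2 then 2 else 3)"
    define w :: real where "w = (if p = 2 then 2 else 1)"
    have qp: "q \<le> real p"
    proof (cases "p = 2")
      case True then show ?thesis unfolding q_def by simp
    next
      case False
      then have "p \<ge> 3" using p2 by simp
      then have "real p \<ge> 3" by simp
      then show ?thesis using False unfolding q_def by simp
    qed
    have R: "real a + 1 \<le> B powr w * q powr (real a / u)"
      using real_R2[OF u6, of "real a"] real_R3[OF u6, of "real a"] unfolding Bu q_def w_def
      by (cases "p = 2") simp_all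
    have t: "divisor_tau k (p^a) \<le> (a+1)^(k-1)" using tau_primepow[OF p, of k a] k by simp
    have qpos: "q > 0" unfolding q_def by simp
    have "real (divisor_tau k (p^a)) \<le> (real a + 1) ^ (k-1)" using t by (metis of_nat_le_iff of_nat_power of_nat_Suc Suc_eq_plus1 add.commute)
    also have "\<dots> \<le> (B powr w * q powr (real a / u)) ^ (k-1)" using R by (intro power_mono) auto
    also have "\<dots> = (B powr w * q powr (real a / u)) powr (real (k-1))"
      using Bpos qpos by (simp add: powr_realpow)
    also have "\<dots> = B powr (w * real (k-1)) * q powr (real a / u * real (k-1))"
      by (simp add: powr_mult powr_powr)
    also have "real a / u * real (k-1) = real a * \<epsilon>" unfolding u_def using k1 e0 k by (simp add: of_nat_diff)
    also have "q powr (real a * \<epsilon>) \<le> real p powr (real a * \<epsilon>)"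
      using qp qpos e0 by (intro powr_mono2) auto
    then have "B powr (w * real (k-1)) * q powr (real a * \<epsilon>) \<le> B powr (w * real (k-1)) * real p powr (real a * \<epsilon>)"
      by (intro mult_left_mono) auto
    finally have "real (divisor_tau k (p^a)) \<le> B powr (w * real (k-1)) * real p powr (real a * \<epsilon>)" .
    moreover have "w * real (k-1) = (real k - 1) * w" using k by (simp add: of_nat_diff)
    moreover have e1: "(if real p < real k powr (1/\<epsilon>) then (if p = 2 then 2 else 1) else 0) = w"
      using True by (simp add: Y_def w_def)
    moreover have e2: "real (p^a) powr \<epsilon> = real p powr (real a * \<epsilon>)" using pa by simp
    ultimately show ?thesis unfolding B_def[symmetric] by (simp only:)
  qed
qed

lemma pf_decomp:
  assumes n: "n > (1::nat)"
  obtains p a m where "prime p" "a \<ge> 1" "n = p^a * m" "m \<ge> 1" "m < n" "coprime (p^a) m"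
    "prime_factors n = insert p (prime_factors m)" "p \<notin> prime_factors m"
proof -
  obtain p where p: "prime p" "p dvd n" using n by (metis prime_factor_nat less_irrefl)
  define a where "a = multiplicity p n"
  define m where "m = n div p^a"
  have nm: "n = p^a * m" unfolding m_def a_def using multiplicity_dvd[of p n] by simp
  have ndvd: "\<not> p dvd m" unfolding m_def a_def by (rule multiplicity_decompose) (use n p(1) in \<open>auto simp: not_prime_unit\<close>)
  have a1: "a \<ge> 1" unfolding a_def using prime_multiplicity_gt_zero_iff[of p n] p n by simp
  have m1: "m \<ge> 1" using nm n by (cases m) auto
  have p2: "p \<ge> 2" using p by (simp add: prime_ge_2_nat)
  have "p^1 \<le> p^a" by (rule power_increasing[OF a1]) (use p2 in simp)
  then have "p^a \<ge> p" by simp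
  then have "p^a \<ge> 2" using p2 by simp
  then have "2 * m \<le> p^a * m" by (rule mult_right_mono) simp
  then have mn: "m < n" using nm m1 by linarith
  have cop: "coprime (p^a) m" using p ndvd by (simp add: prime_imp_coprime)
  have pfpa: "prime_factors (p^a) = {p}" using p a1 by (simp add: prime_factorization_prime_power)
  have "prime_factors n = prime_factors (p^a) \<union> prime_factors m"
    unfolding nm using p2 m1 by (intro prime_factors_product) auto
  then have pfn: "prime_factors n = insert p (prime_factors m)" using pfpa by simp
  have pnm: "p \<notin> prime_factors m" using ndvd by (simp add: in_prime_factors_iff)
  show ?thesis using that p(1) a1 nm m1 mn cop pfn pnm by blast
qed

theorem lemma3:
  fixes k n :: nat and \<epsilon> :: real
  assumes "k \<ge> 2" and "n \<ge> 1" and "0 < \<epsilon>" and "\<epsilon> \<le> (real k - 1) / 6"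
  shows "real (divisor_tau k n) \<le>
           min (real k ^ bigOmega n)
               ((3 * (real k - 1) / (5 * \<epsilon>)) powr (real k powr (1 / \<epsilon>) * (real k - 1)) * real n powr \<epsilon>)"
proof -
  note k = assms(1) and e0 = assms(3) and e1 = assms(4)
  have part1: "real (divisor_tau k n) \<le> real k ^ bigOmega n"
    using tau_Omega[OF assms(2), of k] by (metis of_nat_le_iff of_nat_power)
  define B where "B = 3 * (real k - 1) / (5 * \<epsilon>)"
  define Y where "Y = real k powr (1 / \<epsilon>)"
  define w :: "nat \<Rightarrow> real" where "w = (\<lambda>p. if p = 2 then 2 else 1)"
  define S where "S = (\<lambda>n. {p \<in> prime_factors n. real p < Y})"
  define g where "g = (\<lambda>n. \<Sum>p\<in>S n. w p)"
  have k1: "real k - 1 > 0" using k by simp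
  have B1: "B \<ge> 1"
  proof -
    have "5 * \<epsilon> \<le> 3 * (real k - 1)" using e1 k1 by simp
    then show ?thesis unfolding B_def using e0 by simp
  qed
  have Ypos: "Y > 0" unfolding Y_def using k by simp
  have finS: "finite (S n)" for n unfolding S_def by simp
  have claim: "real (divisor_tau k n) \<le> B powr ((real k - 1) * g n) * real n powr \<epsilon>" if "n \<ge> 1" for n
    using that
  proof (induction n rule: less_induct)
    case (less n)
    show ?case
    proof (cases "n = 1")
      case True
      then have "S n = {}" unfolding S_def by simp
      then have "g n = 0" unfolding g_def by simp
      moreover have "real (divisor_tau k n) = 1" using True tau_one by simp
      ultimately show ?thesis using True B1 by simp
    next
      case False
      then have "n > 1" using less.prems by simp
      then obtain p a m where p: "prime p" and a1: "a \<ge> 1" and nm: "n = p^a * m" and m1: "m \<ge> 1"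
        and mn: "m < n" and cop: "coprime (p^a) m"
        and pfn: "prime_factors n = insert p (prime_factors m)" and pnm: "p \<notin> prime_factors m"
        by (rule pf_decomp)
      define c where "c = (if real p < Y then w p else 0)"
      have gn: "g n = c + g m"
      proof (cases "real p < Y")
        case True
        then have "S n = insert p (S m)" "p \<notin> S m" unfolding S_def using pfn pnm by auto
        then show ?thesis unfolding g_def c_def using True finS by simp
      next
        case False
        then have "S n = S m" unfolding S_def using pfn by auto
        then show ?thesis unfolding g_def c_def using False by simp
      qed
      have p2: "p \<ge> 2" using p by (simp add: prime_ge_2_nat)
      have t: "divisor_tau k n \<le> divisor_tau k (p^a) * divisor_tau k m"
        unfolding nm by (rule tau_coprime[OF cop]) (use p2 m1 in auto)
      have loc: "real (divisor_tau k (p^a)) \<le> B powr ((real k - 1) * c) * real (p^a) powr \<epsilon>"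
        using prime_local[OF k e0 e1 p, of a] unfolding B_def Y_def c_def w_def by simp
      have IH: "real (divisor_tau k m) \<le> B powr ((real k - 1) * g m) * real m powr \<epsilon>"
        using less.IH[OF mn m1] .
      have "real (divisor_tau k n) \<le> real (divisor_tau k (p^a)) * real (divisor_tau k m)"
        using t by (metis of_nat_le_iff of_nat_mult)
      also have "\<dots> \<le> (B powr ((real k - 1) * c) * real (p^a) powr \<epsilon>) * (B powr ((real k - 1) * g m) * real m powr \<epsilon>)"
        by (rule mult_mono[OF loc IH]) auto
      also have "\<dots> = B powr ((real k - 1) * c + (real k - 1) * g m) * (real (p^a) * real m) powr \<epsilon>"
        by (simp add: powr_add powr_mult)
      also have "\<dots> = B powr ((real k - 1) * g n) * real n powr \<epsilon>"
      proof -
        have e1: "(real k - 1) * g n = (real k - 1) * c + (real k - 1) * g m" using gn by (simp add: distrib_left)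
        have e2: "real n = real (p^a) * real m" using nm by simp
        show ?thesis by (simp only: e1 e2)
      qed
      finally show ?thesis .
    qed
  qed
  have gY: "g n \<le> Y"
  proof -
    define N where "N = nat \<lceil>Y\<rceil>"
    have NY: "real N < Y + 1" unfolding N_def using Ypos by linarith
    have sub: "S n - {2} \<subseteq> {3..<N}"
    proof
      fix p assume "p \<in> S n - {2}"
      then have "prime p" "real p < Y" "p \<noteq> 2" unfolding S_def by (auto simp: in_prime_factors_iff)
      then have "p \<ge> 3" "real p < Y" using prime_ge_2_nat[of p] by auto
      moreover have "p < N" unfolding N_def using \<open>real p < Y\<close> by linarith
      ultimately show "p \<in> {3..<N}" by simp
    qed
    have cardle: "card (S n - {2}) \<le> N - 3" using card_mono[OF _ sub] by simp
    have rest: "(\<Sum>p\<in>S n - {2}. w p) = real (card (S n - {2}))" unfolding w_def by simp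
    show ?thesis
    proof (cases "2 \<in> S n")
      case True
      then have "real 2 < Y" unfolding S_def by simp
      then have N3: "N \<ge> 3" unfolding N_def by linarith
      have "g n = w 2 + (\<Sum>p\<in>S n - {2}. w p)" unfolding g_def using True finS by (simp add: sum.remove)
      also have "\<dots> = 2 + real (card (S n - {2}))" using rest by (simp add: w_def)
      also have "\<dots> \<le> 2 + real (N - 3)" using cardle by simp
      also have "\<dots> = real N - 1" using N3 by (simp add: of_nat_diff)
      finally show ?thesis using NY by simp
    next
      case False
      then have "S n - {2} = S n" by simp
      then have "g n = real (card (S n - {2}))" unfolding g_def using rest by simp
      also have "\<dots> \<le> real (N - 3)" using cardle by simp
      also have "\<dots> \<le> Y" using NY Ypos by (cases "N \<ge> 3") (auto simp: of_nat_diff)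
      finally show ?thesis .
    qed
  qed
  have "real (divisor_tau k n) \<le> B powr ((real k - 1) * g n) * real n powr \<epsilon>"
    using claim[OF assms(2)] .
  also have "\<dots> \<le> B powr (Y * (real k - 1)) * real n powr \<epsilon>"
  proof (rule mult_right_mono)
    have "(real k - 1) * g n \<le> (real k - 1) * Y" using gY k1 by (intro mult_left_mono) auto
    then show "B powr ((real k - 1) * g n) \<le> B powr (Y * (real k - 1))"
      using B1 by (intro powr_mono) (auto simp: mult.commute)
  qed simp
  finally have part2: "real (divisor_tau k n) \<le> B powr (Y * (real k - 1)) * real n powr \<epsilon>" .
  show ?thesis using part1 part2 unfolding B_def Y_def by simp
qed

end
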